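(* (i) Let $p(\cdot):\mathbb{R}^n\to[1,\infty)$ be measurable and $1\le q,\alpha\le\infty$. If $p(x)\le\alpha\le q$ for all $x$, then $(L^{p(\cdot)},L^q)^\alpha(\mathbb{R}^n)\hookrightarrow(L^{p(\cdot)},L^q)(\mathbb{R}^n)$, i.e. $(L^{p(\cdot)},L^q)^\alpha(\mathbb{R}^n)\subset(L^{p(\cdot)},L^q)(\mathbb{R}^n)$ with $\|f\|_{(L^{p(\cdot)},L^q)}\lesssim\|f\|_{(L^{p(\cdot)},L^q)^\alpha}$. (ii) If $p(x)=\alpha$ for all $x$ and $q=\infty$, then $(L^{p(\cdot)},L^q)^\alpha(\mathbb{R}^n)$ is the Lebesgue space $L^{\alpha}(\mathbb{R}^n)$.
   Context: For measurable $p(\cdot):\mathbb{R}^n\to[1,\infty)$, $\|f\|_{L^{p(\cdot)}}=\inf\{\lambda>0:\int(|f(x)|/\lambda)^{p(x)}dx\le1\}$, and $L^{p(\cdot)}_{loc}$ is the set of $f$ with $f\chi_F\in L^{p(\cdot)}$ for every compact $F$. The variable amalgam space $(L^{p(\cdot)},L^q)(\mathbb{R}^n)$ is the set of $f\in L^{p(\cdot)}_{loc}$ with $\|f\|_{(L^{p(\cdot)},L^q)}=\big\|\,\|f\chi_{B(\cdot,1)}\|_{L^{p(\cdot)}}\big\|_{L^q}<\infty$ (the $L^q$ norm in the center variable). The variable Fofana space $(L^{p(\cdot)},L^q)^\alpha(\mathbb{R}^n)$ is the set of $f\in L^{p(\cdot)}_{loc}$ with $$\|f\|_{(L^{p(\cdot)},L^q)^\alpha}=\sup_{r>0}\Big\|\,|B(\cdot,r)|^{\frac1\alpha-\frac1{p(\cdot)}-\frac1q}\,\|f\chi_{B(\cdot,r)}\|_{L^{p(\cdot)}}\Big\|_{L^q(\mathbb{R}^n)}<\infty,$$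 where $B(x,r)$ is the open ball centered at $x$ and $|B(x,r)|$ its Lebesgue measure. *)

theory Defs
  imports "HOL-Analysis.Analysis" "HOL-Probability.Essential_Supremum"
begin

definition enn_powr :: "ennreal \<Rightarrow> real \<Rightarrow> ennreal" where
  "enn_powr x r = (if x = \<infinity> then \<infinity> else ennreal (enn2real x powr r))"

definition exp_recip :: "ennreal \<Rightarrow> real" where
  "exp_recip a = (if a = \<infinity> then 0 else 1 / enn2real a)"

definition var_modular :: "('a::euclidean_space \<Rightarrow> real) \<Rightarrow> ('a \<Rightarrow> real) \<Rightarrow> ennreal" where
  "var_modular p f = (\<integral>\<^sup>+ x. ennreal (\<bar>f x\<bar> powr p x) \<partial>lebesgue)"

text \<open>Luxemburg norm of the variable Lebesgue space L^{p(.)} (value infinity if the set is empty).\<close>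
definition var_norm :: "('a::euclidean_space \<Rightarrow> real) \<Rightarrow> ('a \<Rightarrow> real) \<Rightarrow> ennreal" where
  "var_norm p f = Inf {ennreal l | l. l > 0 \<and> var_modular p (\<lambda>x. f x / l) \<le> 1}"

definition var_Lp_loc :: "('a::euclidean_space \<Rightarrow> real) \<Rightarrow> ('a \<Rightarrow> real) set" where
  "var_Lp_loc p = {f. f \<in> borel_measurable lebesgue \<and>
      (\<forall>F. compact F \<longrightarrow> var_norm p (\<lambda>x. f x * indicator F x) < \<infinity>)}"

definition Lq_norm :: "ennreal \<Rightarrow> ('a::euclidean_space \<Rightarrow> ennreal) \<Rightarrow> ennreal" where
  "Lq_norm q g = (if q = \<infinity> then esssup lebesgue g
     else enn_powr (\<integral>\<^sup>+ x. enn_powr (g x) (enn2real q) \<partial>lebesgue) (1 / enn2real q))"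

definition amalgam_norm :: "('a::euclidean_space \<Rightarrow> real) \<Rightarrow> ennreal \<Rightarrow> ('a \<Rightarrow> real) \<Rightarrow> ennreal" where
  "amalgam_norm p q f = Lq_norm q (\<lambda>y. var_norm p (\<lambda>x. f x * indicator (ball y 1) x))"

definition amalgam_space :: "('a::euclidean_space \<Rightarrow> real) \<Rightarrow> ennreal \<Rightarrow> ('a \<Rightarrow> real) set" where
  "amalgam_space p q = {f. f \<in> var_Lp_loc p \<and> amalgam_norm p q f < \<infinity>}"

definition fofana_norm :: "('a::euclidean_space \<Rightarrow> real) \<Rightarrow> ennreal \<Rightarrow> ennreal \<Rightarrow> ('a \<Rightarrow> real) \<Rightarrow> ennreal" where
  "fofana_norm p q \<alpha> f = (SUP r\<in>{0<..}. Lq_norm q (\<lambda>y.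
      ennreal (measure lebesgue (ball y r) powr (exp_recip \<alpha> - 1 / p y - exp_recip q))
      * var_norm p (\<lambda>x. f x * indicator (ball y r) x)))"

definition fofana_space :: "('a::euclidean_space \<Rightarrow> real) \<Rightarrow> ennreal \<Rightarrow> ennreal \<Rightarrow> ('a \<Rightarrow> real) set" where
  "fofana_space p q \<alpha> = {f. f \<in> var_Lp_loc p \<and> fofana_norm p q \<alpha> f < \<infinity>}"

definition Leb_space :: "real \<Rightarrow> ('a::euclidean_space \<Rightarrow> real) set" where
  "Leb_space a = {f. f \<in> borel_measurable lebesgue \<and> (\<integral>\<^sup>+ x. ennreal (\<bar>f x\<bar> powr a) \<partial>lebesgue) < \<infinity>}"

definition Leb_norm :: "real \<Rightarrow> ('a::euclidean_space \<Rightarrow> real) \<Rightarrow> ennreal" where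
  "Leb_norm a f = enn_powr (\<integral>\<^sup>+ x. ennreal (\<bar>f x\<bar> powr a) \<partial>lebesgue) (1 / a)"

end

theory Submission
  imports Defs
begin

lemma enn_powr_mono:
  assumes "x \<le> y" "r > 0" shows "enn_powr x r \<le> enn_powr y r"
proof (cases "y = \<infinity>")
  case True then show ?thesis by (simp add: enn_powr_def)
next
  case False
  then have "x \<noteq> \<infinity>" using assms(1) top.extremum_unique by fastforce
  moreover have "enn2real x \<le> enn2real y" using assms(1) False by (simp add: enn2real_mono top.not_eq_extremum)
  ultimately show ?thesis using False assms(2)
    by (simp add: enn_powr_def powr_mono2 ennreal_leI)
qed

lemma enn_powr_inv:
  assumes "r > 0" shows "enn_powr (enn_powr x r) (1/r) = x"
proof (cases "x = \<infinity>")
  case True then show ?thesis by (simp add: enn_powr_def)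
next
  case False
  have "(enn2real x powr r) powr (1/r) = enn2real x"
    using assms by (simp add: powr_powr)
  then show ?thesis using False
    by (simp add: enn_powr_def ennreal_enn2real_if)
qed

lemma enn_powr_top_iff: "enn_powr x r = \<infinity> \<longleftrightarrow> x = \<infinity>"
  by (simp add: enn_powr_def top.not_eq_extremum)

lemma enn_powr_less_top_iff: "enn_powr x r < \<infinity> \<longleftrightarrow> x < \<infinity>"
  by (simp add: enn_powr_def top.not_eq_extremum)

lemma enn_powr_mult:
  assumes "c > 0" "r > 0"
  shows "enn_powr (ennreal c * x) r = ennreal (c powr r) * enn_powr x r"
proof (cases "x = \<infinity>")
  case True then show ?thesis using assms by (simp add: enn_powr_def ennreal_mult_top)
next
  case False
  then obtain t where t: "x = ennreal t" "t \<ge> 0" by (cases x) auto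
  then show ?thesis using assms
    by (simp add: enn_powr_def ennreal_mult[symmetric] powr_mult)
qed

lemma nn_integral_cmult_le:
  assumes "c > 0"
  shows "(\<integral>\<^sup>+x. ennreal c * f x \<partial>M) \<le> ennreal c * integral\<^sup>N M f"
  unfolding nn_integral_def[of M "\<lambda>x. ennreal c * f x"]
proof (rule SUP_least, clarify)
  fix g assume sg: "simple_function M g" and le: "g \<le> (\<lambda>x. ennreal c * f x)"
  define g' where "g' = (\<lambda>x. ennreal (1/c) * g x)"
  have sg': "simple_function M g'" unfolding g'_def using sg by (rule simple_function_compose1)
  have cc: "ennreal c * ennreal (1/c) = 1" using assms by (simp add: ennreal_mult[symmetric])
  have "g' \<le> f"
  proof (rule le_funI)
    fix x
    have "g' x \<le> ennreal (1/c) * (ennreal c * f x)" unfolding g'_def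
      using le by (simp add: le_fun_def mult_left_mono)
    also have "\<dots> = f x" using cc by (simp add: mult.assoc[symmetric] mult.commute)
    finally show "g' x \<le> f x" .
  qed
  then have "integral\<^sup>S M g' \<le> integral\<^sup>N M f"
    unfolding nn_integral_def using sg' by (auto intro: SUP_upper)
  have "g = (\<lambda>x. ennreal c * g' x)" unfolding g'_def using cc
    by (simp add: mult.assoc[symmetric])
  then have "integral\<^sup>S M g = ennreal c * integral\<^sup>S M g'" using sg' by simp
  also have "\<dots> \<le> ennreal c * integral\<^sup>N M f"
    using \<open>integral\<^sup>S M g' \<le> integral\<^sup>N M f\<close> by (simp add: mult_left_mono)
  finally show "integral\<^sup>S M g \<le> ennreal c * integral\<^sup>N M f" .
qed


lemma Lq_norm_scale:
  fixes g h :: "'a::euclidean_space \<Rightarrow> ennreal"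
  assumes C: "C > 0" and q: "1 \<le> q"
    and le: "\<And>y. g y \<le> ennreal C * h y"
    and meas: "h \<in> borel_measurable lebesgue \<Longrightarrow> g \<in> borel_measurable lebesgue"
  shows "Lq_norm q g \<le> ennreal C * Lq_norm q h"
proof (cases "q = \<infinity>")
  case True
  show ?thesis
  proof (cases "h \<in> borel_measurable lebesgue")
    case hm: True
    have "esssup lebesgue g \<le> ennreal C * esssup lebesgue h"
    proof (rule esssup_I)
      show "g \<in> borel_measurable lebesgue" using meas hm .
      show "AE x in lebesgue. g x \<le> ennreal C * esssup lebesgue h"
        using esssup_AE[where M=lebesgue and f=h]
        by eventually_elim (use le in \<open>meson mult_left_mono order_trans zero_le\<close>)
    qed
    then show ?thesis using True by (simp add: Lq_norm_def)
  next
    case False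
    then show ?thesis using True C by (simp add: Lq_norm_def esssup_non_measurable ennreal_mult_top)
  qed
next
  case False
  define s where "s = enn2real q"
  have s1: "s \<ge> 1" using q False unfolding s_def
    using enn2real_mono[OF q] by (simp add: top.not_eq_extremum)
  have "(\<integral>\<^sup>+ y. enn_powr (g y) s \<partial>lebesgue) \<le> (\<integral>\<^sup>+ y. ennreal (C powr s) * enn_powr (h y) s \<partial>lebesgue)"
    using s1 C by (intro nn_integral_mono) (simp add: enn_powr_mono[OF le] enn_powr_mult[symmetric])
  also have "\<dots> \<le> ennreal (C powr s) * (\<integral>\<^sup>+ y. enn_powr (h y) s \<partial>lebesgue)"
    using C by (intro nn_integral_cmult_le) simp
  finally have "enn_powr (\<integral>\<^sup>+ y. enn_powr (g y) s \<partial>lebesgue) (1/s)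
      \<le> enn_powr (ennreal (C powr s) * (\<integral>\<^sup>+ y. enn_powr (h y) s \<partial>lebesgue)) (1/s)"
    using s1 by (intro enn_powr_mono) auto
  also have "\<dots> = ennreal C * enn_powr (\<integral>\<^sup>+ y. enn_powr (h y) s \<partial>lebesgue) (1/s)"
    using s1 C by (simp add: enn_powr_mult powr_powr)
  finally show ?thesis using False by (simp add: Lq_norm_def s_def)
qed


lemma exp_recip_bounds: "1 \<le> x \<Longrightarrow> 0 \<le> exp_recip x \<and> exp_recip x \<le> 1"
proof -
  assume x: "1 \<le> x"
  show ?thesis
  proof (cases "x = \<infinity>")
    case False
    then have "1 \<le> enn2real x" using enn2real_mono[OF x] by (simp add: top.not_eq_extremum)
    then show ?thesis using False by (simp add: exp_recip_def)
  qed (simp add: exp_recip_def)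
qed

lemma measure_ball_1:
  "measure lebesgue (ball (y::'a::euclidean_space) 1) = measure lborel (ball (0::'a) 1)"
  using content_ball_conv_unit_ball[of 1 y] by simp

lemma part1:
  fixes p :: "'a::euclidean_space \<Rightarrow> real" and q \<alpha> :: ennreal
  assumes p_meas: "p \<in> borel_measurable lebesgue"
    and p_ge1: "\<And>x. 1 \<le> p x"
    and q_ge1: "1 \<le> q" and \<alpha>_ge1: "1 \<le> \<alpha>"
  shows "\<exists>C::real. C > 0 \<and> (\<forall>f. amalgam_norm p q f \<le> ennreal C * fofana_norm p q \<alpha> f)"
proof -
  define \<omega> where "\<omega> = measure lborel (ball (0::'a) 1)"
  have \<omega>: "\<omega> > 0" unfolding \<omega>_def by (rule content_ball_pos) simp
  define e where "e = (\<lambda>y. exp_recip \<alpha> - 1 / p y - exp_recip q)"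
  have eb: "-2 \<le> e y \<and> e y \<le> 1" for y
  proof -
    have "0 < 1 / p y" "1 / p y \<le> 1" using p_ge1[of y] by auto
    then show ?thesis using exp_recip_bounds[OF q_ge1] exp_recip_bounds[OF \<alpha>_ge1]
      unfolding e_def by linarith
  qed
  define c where "c = min (\<omega> powr -2) \<omega>"
  have c: "c > 0" unfolding c_def using \<omega> by simp
  have cle: "c \<le> \<omega> powr e y" for y
  proof (cases "\<omega> \<ge> 1")
    case True
    then have "\<omega> powr -2 \<le> \<omega> powr e y" using eb[of y] by (intro powr_mono) auto
    then show ?thesis unfolding c_def by simp
  next
    case False
    then have "\<omega> powr 1 \<le> \<omega> powr e y" using eb[of y] \<omega> by (intro powr_mono') auto
    then show ?thesis unfolding c_def using \<omega> by simp
  qed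
  show ?thesis
  proof (intro exI[of _ "1/c"] conjI allI)
    show "0 < 1/c" using c by simp
    fix f
    define G where "G = (\<lambda>y. var_norm p (\<lambda>x. f x * indicator (ball y 1) x))"
    define h where "h = (\<lambda>y. ennreal (measure lebesgue (ball y 1) powr e y) * G y)"
    have hw: "h = (\<lambda>y. ennreal (\<omega> powr e y) * G y)"
      unfolding h_def \<omega>_def measure_ball_1 ..
    have "Lq_norm q G \<le> ennreal (1/c) * Lq_norm q h"
    proof (rule Lq_norm_scale[OF _ q_ge1])
      show "0 < 1/c" using c by simp
      fix y
      have "G y = ennreal (1/c) * ennreal c * G y"
        using c by (simp add: ennreal_mult[symmetric])
      also have "\<dots> \<le> ennreal (1/c) * (ennreal (\<omega> powr e y) * G y)"
        unfolding mult.assoc using cle[of y]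
        by (intro mult_left_mono) (auto intro: mult_right_mono ennreal_leI)
      finally show "G y \<le> ennreal (1/c) * h y" unfolding hw .
    next
      assume hm: "h \<in> borel_measurable lebesgue"
      have "G = (\<lambda>y. ennreal (\<omega> powr (- e y)) * h y)"
      proof
        fix y
        have "ennreal (\<omega> powr (- e y)) * ennreal (\<omega> powr e y) = 1"
          using \<omega> by (simp add: ennreal_mult[symmetric] powr_add[symmetric])
        then show "G y = ennreal (\<omega> powr (- e y)) * h y" unfolding hw
          by (simp add: mult.assoc[symmetric])
      qed
      also have "\<dots> \<in> borel_measurable lebesgue"
        unfolding e_def using hm p_meas by measurable
      finally show "G \<in> borel_measurable lebesgue" .
    qed
    also have "Lq_norm q h \<le> fofana_norm p q \<alpha> f"
      unfolding fofana_norm_def h_def G_def e_def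
      by (rule SUP_upper[where i=1]) simp
    finally show "amalgam_norm p q f \<le> ennreal (1/c) * fofana_norm p q \<alpha> f"
      unfolding amalgam_norm_def G_def
      by (meson mult_left_mono order_trans zero_le)
  qed
qed


lemma var_modular_const_scale:
  assumes fm: "f \<in> borel_measurable lebesgue" and a: "a > 0" and l: "l > 0"
  shows "var_modular (\<lambda>_. a) (\<lambda>x. f x / l)
     = ennreal (l powr -a) * (\<integral>\<^sup>+x. ennreal (\<bar>f x\<bar> powr a) \<partial>lebesgue)"
proof -
  have "\<And>x. \<bar>f x / l\<bar> powr a = l powr -a * \<bar>f x\<bar> powr a"
    using l by (simp add: powr_divide powr_minus_divide)
  then have "var_modular (\<lambda>_. a) (\<lambda>x. f x / l)
      = (\<integral>\<^sup>+x. ennreal (l powr -a) * ennreal (\<bar>f x\<bar> powr a) \<partial>lebesgue)"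
    unfolding var_modular_def by (simp add: ennreal_mult)
  also have "\<dots> = ennreal (l powr -a) * (\<integral>\<^sup>+x. ennreal (\<bar>f x\<bar> powr a) \<partial>lebesgue)"
    using fm by (intro nn_integral_cmult) measurable
  finally show ?thesis .
qed

lemma var_norm_const:
  assumes fm: "f \<in> borel_measurable lebesgue" and a: "a > 0"
  shows "var_norm (\<lambda>_. a) f = enn_powr (\<integral>\<^sup>+x. ennreal (\<bar>f x\<bar> powr a) \<partial>lebesgue) (1/a)"
proof -
  define I where "I = (\<integral>\<^sup>+x. ennreal (\<bar>f x\<bar> powr a) \<partial>lebesgue)"
  have vn: "var_norm (\<lambda>_. a) f = Inf {ennreal l | l. l > 0 \<and> ennreal (l powr -a) * I \<le> 1}"
    unfolding var_norm_def I_def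
    by (intro arg_cong[where f=Inf]) (auto simp: var_modular_const_scale[OF fm a])
  show ?thesis
  proof (cases "I = \<infinity>")
    case True
    then have E: "{ennreal l | l. l > 0 \<and> ennreal (l powr -a) * I \<le> 1} = {}"
      by (auto simp: ennreal_mult_top top_unique)
    have "var_norm (\<lambda>_. a) f = \<infinity>" unfolding vn E by simp
    then show ?thesis using True by (simp add: I_def[symmetric] enn_powr_def)
  next
    case False
    then obtain t where t: "I = ennreal t" "t \<ge> 0" by (cases I) auto
    have iff: "ennreal (l powr -a) * I \<le> 1 \<longleftrightarrow> t powr (1/a) \<le> l" if l: "l > 0" for l
    proof -
      have "ennreal (l powr -a) * I \<le> 1 \<longleftrightarrow> l powr -a * t \<le> 1"
        using t l by (simp add: ennreal_mult[symmetric] ennreal_1[symmetric] ennreal_le_iff del: ennreal_1)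
      also have "\<dots> \<longleftrightarrow> t \<le> l powr a"
        using l by (simp add: powr_minus field_simps)
      also have "\<dots> \<longleftrightarrow> t powr (1/a) \<le> (l powr a) powr (1/a)"
        using a t l by (smt (verit) powr_mono2 powr_less_mono2 powr_ge_zero divide_pos_pos)
      also have "(l powr a) powr (1/a) = l" using a l by (simp add: powr_powr)
      finally show ?thesis .
    qed
    have eq: "{ennreal l | l. l > 0 \<and> ennreal (l powr -a) * I \<le> 1}
        = {ennreal l | l. l > 0 \<and> t powr (1/a) \<le> l}"
      using iff by blast
    have "Inf {ennreal l | l. l > 0 \<and> t powr (1/a) \<le> l} = ennreal (t powr (1/a))"
    proof (rule antisym)
      show "ennreal (t powr (1/a)) \<le> Inf {ennreal l | l. l > 0 \<and> t powr (1/a) \<le> l}"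
        by (auto intro!: Inf_greatest ennreal_leI)
      show "Inf {ennreal l | l. l > 0 \<and> t powr (1/a) \<le> l} \<le> ennreal (t powr (1/a))"
      proof (cases "t = 0")
        case True
        show ?thesis
        proof (rule ennreal_le_epsilon)
          fix e :: real assume "0 < e"
          then have "Inf {ennreal l | l. l > 0 \<and> t powr (1/a) \<le> l} \<le> ennreal e"
            using True by (intro Inf_lower) auto
          then show "Inf {ennreal l | l. l > 0 \<and> t powr (1/a) \<le> l} \<le> ennreal (t powr (1/a)) + ennreal e"
            using True by simp
        qed
      next
        case False
        then show ?thesis using t by (intro Inf_lower) auto
      qed
    qed
    then show ?thesis using vn eq t by (simp add: I_def[symmetric] enn_powr_def)
  qed
qed


lemma ball_integral_measurable:
  fixes f :: "'a::euclidean_space \<Rightarrow> real"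
  assumes fm: "f \<in> borel_measurable lebesgue" and a: "a > 0"
  shows "(\<lambda>y. \<integral>\<^sup>+x. ennreal (\<bar>f x * indicator (ball y r) x\<bar> powr a) \<partial>lebesgue) \<in> borel_measurable lebesgue"
proof -
  define u where "u = (\<lambda>x. ennreal (\<bar>f x\<bar> powr a))"
  have um: "u \<in> borel_measurable (completion lborel)" unfolding u_def using fm by measurable
  obtain u' where u'm: "u' \<in> borel_measurable lborel" and ae: "AE x in lborel. u x = u' x"
    using completion_ex_borel_measurable[OF um] by blast
  have eq: "(\<integral>\<^sup>+x. ennreal (\<bar>f x * indicator (ball y r) x\<bar> powr a) \<partial>lebesgue)
      = (\<integral>\<^sup>+x. u' x * (if dist y x < r then 1 else 0) \<partial>lborel)" for y
  proof -
    have "(\<integral>\<^sup>+x. ennreal (\<bar>f x * indicator (ball y r) x\<bar> powr a) \<partial>lebesgue)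
        = (\<integral>\<^sup>+x. u x * (if dist y x < r then 1 else 0) \<partial>lborel)"
      unfolding nn_integral_completion u_def using a
      by (intro nn_integral_cong) (auto simp: indicator_def)
    also have "\<dots> = (\<integral>\<^sup>+x. u' x * (if dist y x < r then 1 else 0) \<partial>lborel)"
      using ae by (intro nn_integral_cong_AE) auto
    finally show ?thesis .
  qed
  have "(\<lambda>y. \<integral>\<^sup>+x. u' x * (if dist y x < r then 1 else 0) \<partial>lborel) \<in> borel_measurable lborel"
    using u'm by measurable
  then show ?thesis unfolding eq by (rule measurable_completion)
qed


lemma enn_powr_measurable[measurable (raw)]:
  assumes "F \<in> borel_measurable M"
  shows "(\<lambda>y. enn_powr (F y) s) \<in> borel_measurable M"
  unfolding enn_powr_def using assms by measurable

lemma esssup_ge: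
  fixes h :: "'b \<Rightarrow> ennreal"
  assumes A: "A \<in> sets M" "emeasure M A \<noteq> 0" and le: "\<And>y. y \<in> A \<Longrightarrow> c \<le> h y"
  shows "c \<le> esssup M h"
proof (rule ccontr)
  assume "\<not> c \<le> esssup M h"
  then have lt: "esssup M h < c" by simp
  have "AE y in M. y \<notin> A"
    using esssup_AE[where M=M and f=h]
    by eventually_elim (use le lt in \<open>fastforce\<close>)
  then have "A \<in> null_sets M" using AE_iff_null_sets[OF A(1)] by simp
  then show False using A(2) by auto
qed

lemma fofana_const:
  fixes f :: "'a::euclidean_space \<Rightarrow> real"
  assumes fm: "f \<in> borel_measurable lebesgue" and a1: "a \<ge> 1"
  shows "fofana_norm (\<lambda>_. a) \<infinity> (ennreal a) f
     = enn_powr (\<integral>\<^sup>+x. ennreal (\<bar>f x\<bar> powr a) \<partial>lebesgue) (1/a)"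
proof -
  have a: "a > 0" using a1 by simp
  define I where "I = (\<lambda>g::'a \<Rightarrow> real. \<integral>\<^sup>+x. ennreal (\<bar>g x\<bar> powr a) \<partial>lebesgue)"
  define H where "H = (\<lambda>r y. enn_powr (I (\<lambda>x. f x * indicator (ball y r) x)) (1/a))"
  have Hm: "H r \<in> borel_measurable lebesgue" for r
    unfolding H_def I_def using ball_integral_measurable[OF fm a] by measurable
  have bs[measurable]: "ball y r \<in> sets lebesgue" for y :: 'a and r by simp
  have fchi: "(\<lambda>x. f x * indicator (ball y r) x) \<in> borel_measurable lebesgue" for y r
    using fm by measurable
  have "fofana_norm (\<lambda>_. a) \<infinity> (ennreal a) f = (SUP r\<in>{0<..}. esssup lebesgue (H r))"
  proof -
    have heq: "(\<lambda>y. ennreal (measure lebesgue (ball y r) powr (exp_recip (ennreal a) - 1 / a - exp_recip \<infinity>)) *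
               var_norm (\<lambda>_. a) (\<lambda>x. f x * indicator (ball y r) x)) = H r" if r: "r > 0" for r :: real
    proof
      fix y :: 'a
      have mpos: "measure lebesgue (ball y r) > 0"
        using content_ball_pos[OF r, of y] by simp
      have "exp_recip (ennreal a) - 1 / a - exp_recip \<infinity> = 0"
        using a by (simp add: exp_recip_def)
      then show "ennreal (measure lebesgue (ball y r) powr (exp_recip (ennreal a) - 1 / a - exp_recip \<infinity>)) *
               var_norm (\<lambda>_. a) (\<lambda>x. f x * indicator (ball y r) x) = H r y"
        using mpos by (simp add: H_def I_def var_norm_const[OF fchi a])
    qed
    show ?thesis unfolding fofana_norm_def Lq_norm_def
      using heq by (auto intro!: SUP_cong)
  qed
  also have "\<dots> = enn_powr (I f) (1/a)"
  proof (rule antisym)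
    show "(SUP r\<in>{0<..}. esssup lebesgue (H r)) \<le> enn_powr (I f) (1/a)"
    proof (rule SUP_least, rule esssup_I[OF Hm], rule AE_I2)
      fix r y
      have "I (\<lambda>x. f x * indicator (ball y r) x) \<le> I f"
        unfolding I_def using a
        by (intro nn_integral_mono ennreal_leI powr_mono2) (auto simp: indicator_def)
      then show "H r y \<le> enn_powr (I f) (1/a)"
        unfolding H_def using a by (intro enn_powr_mono) auto
    qed
  next
    define S where "S = (SUP r\<in>{0<..}. esssup lebesgue (H r))"
    define g where "g = (\<lambda>(n::nat) x. ennreal (\<bar>f x * indicator (ball 0 (real n)) x\<bar> powr a))"
    have cn: "I (\<lambda>x. f x * indicator (ball 0 (real n)) x) \<le> enn_powr S a" for n
    proof -
      have "enn_powr (I (\<lambda>x. f x * indicator (ball 0 (real n)) x)) (1/a) \<le> esssup lebesgue (H (real n + 1))"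
      proof (rule esssup_ge)
        show "ball 0 1 \<in> sets lebesgue" by simp
        have "measure lebesgue (ball (0::'a) 1) > 0" using content_ball_pos[of 1 0] by simp
        then show "emeasure lebesgue (ball (0::'a) 1) \<noteq> 0" by (auto simp: measure_def)
        fix y :: 'a assume y: "y \<in> ball 0 1"
        have sub: "ball 0 (real n) \<subseteq> ball y (real n + 1)"
        proof
          fix x assume "x \<in> ball (0::'a) (real n)"
          then have "dist y x \<le> dist y 0 + dist 0 x" "dist 0 x < real n" "dist y 0 < 1"
            using y dist_triangle[of y x 0] by (auto simp: dist_commute)
          then show "x \<in> ball y (real n + 1)" by simp
        qed
        have "I (\<lambda>x. f x * indicator (ball 0 (real n)) x) \<le> I (\<lambda>x. f x * indicator (ball y (real n + 1)) x)"
          unfolding I_def using sub by (intro nn_integral_mono) (auto simp: indicator_def)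
        then show "enn_powr (I (\<lambda>x. f x * indicator (ball 0 (real n)) x)) (1/a) \<le> H (real n + 1) y"
          unfolding H_def using a by (intro enn_powr_mono) auto
      qed
      also have "\<dots> \<le> S" unfolding S_def by (rule SUP_upper) auto
      finally have "enn_powr (enn_powr (I (\<lambda>x. f x * indicator (ball 0 (real n)) x)) (1/a)) (1/(1/a)) \<le> enn_powr S (1/(1/a))"
        using a by (intro enn_powr_mono) auto
      then show ?thesis using a enn_powr_inv[of "1/a"] by simp
    qed
    have inc: "incseq g"
    proof (rule incseq_SucI, rule le_funI)
      fix n x
      show "g n x \<le> g (Suc n) x" unfolding g_def using a
        by (auto simp: indicator_def intro!: ennreal_leI)
    qed
    have gm: "g n \<in> borel_measurable lebesgue" for n unfolding g_def using fm by measurable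
    have sup: "(SUP n. g n x) = ennreal (\<bar>f x\<bar> powr a)" for x
    proof (rule antisym)
      show "(SUP n. g n x) \<le> ennreal (\<bar>f x\<bar> powr a)"
        unfolding g_def using a
        by (intro SUP_least ennreal_leI powr_mono2) (auto simp: indicator_def)
      obtain n :: nat where "norm x < real n" using reals_Archimedean2 by blast
      then have "g n x = ennreal (\<bar>f x\<bar> powr a)" unfolding g_def by (simp add: indicator_def)
      then show "ennreal (\<bar>f x\<bar> powr a) \<le> (SUP n. g n x)" by (metis UNIV_I SUP_upper)
    qed
    have "I f = (SUP n. integral\<^sup>N lebesgue (g n))"
      unfolding I_def sup[symmetric]
      by (rule nn_integral_monotone_convergence_SUP[OF inc gm])
    also have "\<dots> \<le> enn_powr S a"
      using cn by (intro SUP_least) (simp add: g_def I_def)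
    finally have "enn_powr (I f) (1/a) \<le> enn_powr (enn_powr S a) (1/a)"
      using a by (intro enn_powr_mono) auto
    then show "enn_powr (I f) (1/a) \<le> S" using enn_powr_inv[OF a] by simp
  qed
  finally show ?thesis unfolding I_def .
qed


theorem proposition2p1:
  fixes p :: "'a::euclidean_space \<Rightarrow> real" and q \<alpha> :: ennreal
  assumes p_meas: "p \<in> borel_measurable lebesgue"
    and p_ge1: "\<And>x. 1 \<le> p x"
    and q_ge1: "1 \<le> q" and \<alpha>_ge1: "1 \<le> \<alpha>"
  shows "((\<forall>x. ennreal (p x) \<le> \<alpha>) \<and> \<alpha> \<le> q \<longrightarrow>
           fofana_space p q \<alpha> \<subseteq> amalgam_space p q \<and>
           (\<exists>C::real. C > 0 \<and> (\<forall>f \<in> fofana_space p q \<alpha>.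
               amalgam_norm p q f \<le> ennreal C * fofana_norm p q \<alpha> f)))
       \<and> ((\<forall>x. ennreal (p x) = \<alpha>) \<and> q = \<infinity> \<longrightarrow>
           fofana_space p q \<alpha> = Leb_space (enn2real \<alpha>) \<and>
           (\<forall>f \<in> fofana_space p q \<alpha>. fofana_norm p q \<alpha> f = Leb_norm (enn2real \<alpha>) f))"
proof (intro conjI impI)
  obtain C :: real where C: "C > 0" "\<And>f. amalgam_norm p q f \<le> ennreal C * fofana_norm p q \<alpha> f"
    using part1[OF p_meas p_ge1 q_ge1 \<alpha>_ge1] by blast
  show "\<exists>C::real. C > 0 \<and> (\<forall>f \<in> fofana_space p q \<alpha>. amalgam_norm p q f \<le> ennreal C * fofana_norm p q \<alpha> f)"
    using C by blast
  show "fofana_space p q \<alpha> \<subseteq> amalgam_space p q"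
  proof
    fix f assume "f \<in> fofana_space p q \<alpha>"
    then have f: "f \<in> var_Lp_loc p" "fofana_norm p q \<alpha> f < \<infinity>" by (auto simp: fofana_space_def)
    have "ennreal C * fofana_norm p q \<alpha> f < \<infinity>" using f(2) by (simp add: ennreal_mult_less_top)
    then have "amalgam_norm p q f < \<infinity>" using C(2)[of f] by (meson le_less_trans)
    then show "f \<in> amalgam_space p q" using f by (simp add: amalgam_space_def)
  qed
next
  assume h: "(\<forall>x. ennreal (p x) = \<alpha>) \<and> q = \<infinity>"
  define a where "a = p 0"
  have a1: "a \<ge> 1" unfolding a_def by (rule p_ge1)
  have \<alpha>a: "\<alpha> = ennreal a" using h unfolding a_def by simp
  have pa: "p = (\<lambda>_. a)"
  proof
    fix x
    have "ennreal (p x) = ennreal a" using h \<alpha>a by simp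
    then show "p x = a" using p_ge1[of x] a1 by (simp add: ennreal_inj)
  qed
  have ea: "enn2real \<alpha> = a" using \<alpha>a a1 by simp
  have q: "q = \<infinity>" using h by simp
  have a0: "a > 0" using a1 by simp
  define I where "I = (\<lambda>g::'a \<Rightarrow> real. \<integral>\<^sup>+x. ennreal (\<bar>g x\<bar> powr a) \<partial>lebesgue)"
  have fn: "fofana_norm p q \<alpha> f = enn_powr (I f) (1/a)" if "f \<in> borel_measurable lebesgue" for f
    unfolding pa q \<alpha>a I_def using fofana_const[OF that a1] .
  show "\<forall>f\<in>fofana_space p q \<alpha>. fofana_norm p q \<alpha> f = Leb_norm (enn2real \<alpha>) f"
    using fn by (auto simp: fofana_space_def var_Lp_loc_def Leb_norm_def ea I_def)
  show "fofana_space p q \<alpha> = Leb_space (enn2real \<alpha>)"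
  proof (intro set_eqI iffI)
    fix f assume "f \<in> fofana_space p q \<alpha>"
    then have fm: "f \<in> borel_measurable lebesgue" and "fofana_norm p q \<alpha> f < \<infinity>"
      by (auto simp: fofana_space_def var_Lp_loc_def)
    then have "I f < \<infinity>" using fn[OF fm] enn_powr_less_top_iff[of "I f" "1/a"] by simp
    then show "f \<in> Leb_space (enn2real \<alpha>)" using fm by (simp add: Leb_space_def ea I_def)
  next
    fix f :: "'a \<Rightarrow> real" assume "f \<in> Leb_space (enn2real \<alpha>)"
    then have fm: "f \<in> borel_measurable lebesgue" and If: "I f < \<infinity>"
      by (auto simp: Leb_space_def ea I_def)
    have "var_norm p (\<lambda>x. f x * indicator F x) < \<infinity>" if F: "compact F" for F
    proof -
      have [measurable]: "F \<in> sets lebesgue" using borel_compact[OF F] by simp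
      have fF: "(\<lambda>x. f x * indicator F x) \<in> borel_measurable lebesgue" using fm by measurable
      have "I (\<lambda>x. f x * indicator F x) \<le> I f"
        unfolding I_def using a0
        by (intro nn_integral_mono ennreal_leI powr_mono2) (auto simp: indicator_def)
      then have "I (\<lambda>x. f x * indicator F x) < \<infinity>" using If by (meson le_less_trans)
      then show ?thesis unfolding pa var_norm_const[OF fF a0] I_def[symmetric]
        unfolding I_def by (metis enn_powr_less_top_iff)
    qed
    then have "f \<in> var_Lp_loc p" using fm by (simp add: var_Lp_loc_def)
    moreover have "fofana_norm p q \<alpha> f < \<infinity>"
      using fn[OF fm] If by (metis enn_powr_less_top_iff)
    ultimately show "f \<in> fofana_space p q \<alpha>" by (simp add: fofana_space_def)
  qed
qed

end
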